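(* Let $0 \leq a \leq b$. For any $t > 0$, \[ \mathcal{R}_I(t,a,b) = O\!\left(\frac1t\right). \] Whenever $b \leq \frac14$, setting $\delta_b = \frac14 - b$, \[ \mathcal{R}_I(t,a,b) = O\!\left(\frac{e^{-\frac34 t^2\delta_b^2}}{t^{\frac32}}\right). \]
   Context: For $0\le a\le b$ and $t>0$, define $f_t:[0,\infty)\to\mathbb{R}$ by $f_t(\lambda) = \frac{t}{\sqrt\pi}\int_a^b \exp(-t^2(\lambda-\mu)^2)\,d\mu$ (the convolution of $\mathbf{1}_{[a,b]}$ with the normalised Gaussian $\frac{t}{\sqrt\pi}e^{-t^2x^2}$), and \[ \mathcal{R}_I(t,a,b) = \frac{1}{4\pi}\int_{\frac14}^{+\infty}\big(f_t(\lambda) - \mathbf{1}_{[a,b]}(\lambda)\big)\tanh\!\Big(\pi\sqrt{\lambda-\tfrac14}\Big)\,d\lambda. \] $T_1 = O(T_2)$ means $|T_1|\le CT_2$ with a universal constant $C$ independent of $t,a,b$. *)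

theory Defs
  imports "HOL-Analysis.Analysis"
begin

definition f_t :: "real \<Rightarrow> real \<Rightarrow> real \<Rightarrow> real \<Rightarrow> real" where
  "f_t t a b x = t / sqrt pi * (LINT \<mu>:{a..b}|lborel. exp (- (t\<^sup>2 * (x - \<mu>)\<^sup>2)))"

definition R_I :: "real \<Rightarrow> real \<Rightarrow> real \<Rightarrow> real" where
  "R_I t a b = 1 / (4 * pi) *
     (LINT x:{1/4..}|lborel. (f_t t a b x - indicator {a..b} x) * tanh (pi * sqrt (x - 1/4)))"

end

theory Submission
  imports Defs "HOL-Probability.Distributions"
begin

definition psi :: "real \<Rightarrow> real" where "psi y = indicator {0..} y * exp (- y\<^sup>2)"
definition psi1 :: "real \<Rightarrow> real" where "psi1 y = indicator {0..} y * (exp (- y\<^sup>2) * y)"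
definition phi :: "real \<Rightarrow> real \<Rightarrow> real \<Rightarrow> real" where
  "phi t c x = t / sqrt pi * exp (- (t\<^sup>2 * (c - x)\<^sup>2))"

lemma psi_hb: "has_bochner_integral lborel psi (sqrt pi / 2)"
  using gaussian_moment_0 unfolding psi_def[abs_def] by simp

lemma psi1_hb: "has_bochner_integral lborel psi1 (1 / 2)"
  using gaussian_moment_1 unfolding psi1_def[abs_def] by simp

lemma tailR: assumes "t > 0"
  shows "has_bochner_integral lborel (\<lambda>x. psi (t * (x - c))) (sqrt pi / (2 * t))"
proof -
  have "has_bochner_integral lborel (\<lambda>x. psi (- t * c + t * x)) (sqrt pi / (2 * t))"
    using lborel_has_bochner_integral_real_affine_iff[of t psi "sqrt pi / 2" "- t * c"] psi_hb assms by (simp add: field_simps)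
  moreover have "(\<lambda>x. psi (- t * c + t * x)) = (\<lambda>x. psi (t * (x - c)))"
    by (simp add: algebra_simps)
  ultimately show ?thesis using assms by simp
qed

lemma tailL: assumes "t > 0"
  shows "has_bochner_integral lborel (\<lambda>x. psi (t * (c - x))) (sqrt pi / (2 * t))"
proof -
  have "has_bochner_integral lborel (\<lambda>x. psi (t * c + (- t) * x)) (sqrt pi / (2 * t))"
    using lborel_has_bochner_integral_real_affine_iff[of "-t" psi "sqrt pi / 2" "t * c"] psi_hb assms by (simp add: field_simps)
  moreover have "(\<lambda>x. psi (t * c + (- t) * x)) = (\<lambda>x. psi (t * (c - x)))"
    by (simp add: algebra_simps)
  ultimately show ?thesis using assms by simp
qed

lemma mom1: assumes "t > 0"
  shows "has_bochner_integral lborel (\<lambda>x. psi1 (t * (x - c))) (1 / (2 * t))"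
proof -
  have "has_bochner_integral lborel (\<lambda>x. psi1 (- t * c + t * x)) (1 / (2 * t))"
    using lborel_has_bochner_integral_real_affine_iff[of t psi1 "1 / 2" "- t * c"] psi1_hb assms by (simp add: field_simps)
  moreover have "(\<lambda>x. psi1 (- t * c + t * x)) = (\<lambda>x. psi1 (t * (x - c)))"
    by (simp add: algebra_simps)
  ultimately show ?thesis using assms by simp
qed

lemma phi_nd: assumes "t > 0" shows "phi t c = normal_density c (1 / (t * sqrt 2))"
proof
  fix x
  have "sqrt (2 * pi * (1 / (t * sqrt 2))\<^sup>2) = sqrt pi / t"
    using assms by (simp add: power_divide power_mult_distrib real_sqrt_divide real_sqrt_mult)
  moreover have "(x - c)\<^sup>2 / (2 * (1 / (t * sqrt 2))\<^sup>2) = t\<^sup>2 * (c - x)\<^sup>2"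
    using assms by (simp add: power_divide power_mult_distrib power2_commute)
  ultimately show "phi t c x = normal_density c (1 / (t * sqrt 2)) x"
    unfolding phi_def normal_density_def by (simp add: field_simps) (metis power2_commute)
qed

lemma phi_int: "t > 0 \<Longrightarrow> integrable lborel (phi t c)"
  by (simp add: phi_nd)
lemma phi_total: "t > 0 \<Longrightarrow> integral\<^sup>L lborel (phi t c) = 1"
  by (simp add: phi_nd)

lemma phi_ind_int: "t > 0 \<Longrightarrow> integrable lborel (\<lambda>m. phi t x m * indicator S m)" if "S \<in> sets borel"
  using that by (intro integrable_real_mult_indicator phi_int) auto

lemma phi_nonneg: "t > 0 \<Longrightarrow> 0 \<le> phi t x m"
  by (simp add: phi_def)

lemma ft_eq: "f_t t a b x = integral\<^sup>L lborel (\<lambda>m. phi t x m * indicator {a..b} m)"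
proof -
  have "(\<lambda>m. phi t x m * indicator {a..b} m) = (\<lambda>m. t / sqrt pi * (indicator {a..b} m *\<^sub>R exp (- (t\<^sup>2 * (x - m)\<^sup>2))))"
    by (auto simp: phi_def fun_eq_iff split: split_indicator)
  then show ?thesis unfolding f_t_def set_lebesgue_integral_def by simp
qed

lemma sq_split: "(u::real) \<ge> 0 \<Longrightarrow> v \<ge> 0 \<Longrightarrow> (u + v)\<^sup>2 \<ge> u\<^sup>2 + v\<^sup>2"
  by (simp add: power2_eq_square algebra_simps)

lemma exp_split: assumes "(u::real) \<ge> 0" "v \<ge> 0"
  shows "exp (- (t\<^sup>2 * (u + v)\<^sup>2)) \<le> exp (- (t\<^sup>2 * u\<^sup>2)) * exp (- (t\<^sup>2 * v\<^sup>2))"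
proof -
  have "t\<^sup>2 * (u\<^sup>2 + v\<^sup>2) \<le> t\<^sup>2 * (u + v)\<^sup>2"
    using sq_split[OF assms] by (intro mult_left_mono) auto
  then have "exp (- (t\<^sup>2 * (u + v)\<^sup>2)) \<le> exp (- (t\<^sup>2 * u\<^sup>2) + - (t\<^sup>2 * v\<^sup>2))"
    by (simp add: algebra_simps)
  then show ?thesis by (simp add: exp_add[symmetric])
qed

lemma TR: assumes t: "t > 0" and xc: "x \<le> c"
  shows "integral\<^sup>L lborel (\<lambda>m. phi t x m * indicator {c..} m) \<le> exp (- (t\<^sup>2 * (c - x)\<^sup>2)) / 2"
proof -
  let ?E = "exp (- (t\<^sup>2 * (c - x)\<^sup>2))"
  have hb: "has_bochner_integral lborel (\<lambda>m. ?E * (t / sqrt pi) * psi (t * (m - c))) (?E * (t / sqrt pi) * (sqrt pi / (2 * t)))"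
    by (intro has_bochner_integral_mult_right tailR t)
  have "integral\<^sup>L lborel (\<lambda>m. phi t x m * indicator {c..} m) \<le> integral\<^sup>L lborel (\<lambda>m. ?E * (t / sqrt pi) * psi (t * (m - c)))"
  proof (rule integral_mono)
    show "integrable lborel (\<lambda>m. phi t x m * indicator {c..} m)" using phi_ind_int t by auto
    show "integrable lborel (\<lambda>m. ?E * (t / sqrt pi) * psi (t * (m - c)))" using hb by (rule integrable.intros)
    fix m
    show "phi t x m * indicator {c..} m \<le> ?E * (t / sqrt pi) * psi (t * (m - c))"
    proof (cases "m \<ge> c")
      case True
      have "exp (- (t\<^sup>2 * ((c - x) + (m - c))\<^sup>2)) \<le> ?E * exp (- (t\<^sup>2 * (m - c)\<^sup>2))"
        using exp_split[of "c - x" "m - c" t] True xc by simp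
      moreover have "(c - x) + (m - c) = m - x" by simp
      ultimately have "exp (- (t\<^sup>2 * (x - m)\<^sup>2)) \<le> ?E * exp (- (t\<^sup>2 * (m - c)\<^sup>2))"
        by (simp add: power2_commute[of x m])
      then have "t / sqrt pi * exp (- (t\<^sup>2 * (x - m)\<^sup>2)) \<le> t / sqrt pi * (?E * exp (- (t\<^sup>2 * (m - c)\<^sup>2)))"
        using t by (intro mult_left_mono) auto
      then show ?thesis using True t
        by (simp add: phi_def psi_def power_mult_distrib mult_ac)
    next
      case False
      then show ?thesis using t by (simp add: psi_def)
    qed
  qed
  also have "\<dots> = ?E / 2" using has_bochner_integral_integral_eq[OF hb] t by simp
  finally show ?thesis .
qed

lemma TL: assumes t: "t > 0" and xc: "c \<le> x"
  shows "integral\<^sup>L lborel (\<lambda>m. phi t x m * indicator {..c} m) \<le> exp (- (t\<^sup>2 * (x - c)\<^sup>2)) / 2"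
proof -
  let ?E = "exp (- (t\<^sup>2 * (x - c)\<^sup>2))"
  have hb: "has_bochner_integral lborel (\<lambda>m. ?E * (t / sqrt pi) * psi (t * (c - m))) (?E * (t / sqrt pi) * (sqrt pi / (2 * t)))"
    by (intro has_bochner_integral_mult_right tailL t)
  have "integral\<^sup>L lborel (\<lambda>m. phi t x m * indicator {..c} m) \<le> integral\<^sup>L lborel (\<lambda>m. ?E * (t / sqrt pi) * psi (t * (c - m)))"
  proof (rule integral_mono)
    show "integrable lborel (\<lambda>m. phi t x m * indicator {..c} m)" using phi_ind_int t by auto
    show "integrable lborel (\<lambda>m. ?E * (t / sqrt pi) * psi (t * (c - m)))" using hb by (rule integrable.intros)
    fix m
    show "phi t x m * indicator {..c} m \<le> ?E * (t / sqrt pi) * psi (t * (c - m))"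
    proof (cases "m \<le> c")
      case True
      have "exp (- (t\<^sup>2 * ((x - c) + (c - m))\<^sup>2)) \<le> ?E * exp (- (t\<^sup>2 * (c - m)\<^sup>2))"
        using exp_split[of "x - c" "c - m" t] True xc by simp
      moreover have "(x - c) + (c - m) = x - m" by simp
      ultimately have "exp (- (t\<^sup>2 * (x - m)\<^sup>2)) \<le> ?E * exp (- (t\<^sup>2 * (c - m)\<^sup>2))"
        by simp
      then have "t / sqrt pi * exp (- (t\<^sup>2 * (x - m)\<^sup>2)) \<le> t / sqrt pi * (?E * exp (- (t\<^sup>2 * (c - m)\<^sup>2)))"
        using t by (intro mult_left_mono) auto
      then show ?thesis using True t
        by (simp add: phi_def psi_def power_mult_distrib mult_ac)
    next
      case False
      then show ?thesis using t by (simp add: psi_def)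
    qed
  qed
  also have "\<dots> = ?E / 2" using has_bochner_integral_integral_eq[OF hb] t by simp
  finally show ?thesis .
qed

lemma f_nonneg: "t > 0 \<Longrightarrow> 0 \<le> f_t t a b x"
  unfolding ft_eq by (intro integral_nonneg_AE) (auto simp: phi_nonneg)

lemma f_le1: assumes t: "t > 0" shows "f_t t a b x \<le> 1"
proof -
  have "f_t t a b x \<le> integral\<^sup>L lborel (phi t x)"
    unfolding ft_eq using t
    by (intro integral_mono phi_ind_int phi_int) (auto simp: phi_nonneg mult_left_le split: split_indicator)
  then show ?thesis using phi_total[OF t] by simp
qed

lemma f_right: assumes t: "t > 0" and "b \<le> x"
  shows "f_t t a b x \<le> exp (- (t\<^sup>2 * (x - b)\<^sup>2)) / 2"
proof -
  have "f_t t a b x \<le> integral\<^sup>L lborel (\<lambda>m. phi t x m * indicator {..b} m)"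
    unfolding ft_eq using t
    by (intro integral_mono phi_ind_int) (auto simp: phi_nonneg split: split_indicator)
  then show ?thesis using TL[OF t assms(2)] by simp
qed

lemma f_left: assumes t: "t > 0" and "x \<le> a"
  shows "f_t t a b x \<le> exp (- (t\<^sup>2 * (a - x)\<^sup>2)) / 2"
proof -
  have "f_t t a b x \<le> integral\<^sup>L lborel (\<lambda>m. phi t x m * indicator {a..} m)"
    unfolding ft_eq using t
    by (intro integral_mono phi_ind_int) (auto simp: phi_nonneg split: split_indicator)
  then show ?thesis using TR[OF t assms(2)] by simp
qed

lemma f_mid: assumes t: "t > 0" and "a \<le> x" "x \<le> b"
  shows "1 - f_t t a b x \<le> exp (- (t\<^sup>2 * (x - a)\<^sup>2)) / 2 + exp (- (t\<^sup>2 * (b - x)\<^sup>2)) / 2"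
proof -
  have "1 = integral\<^sup>L lborel (phi t x)" using phi_total[OF t] by simp
  also have "\<dots> \<le> integral\<^sup>L lborel (\<lambda>m. phi t x m * indicator {a..b} m + phi t x m * indicator {..a} m + phi t x m * indicator {b..} m)"
    using t
    by (intro integral_mono phi_ind_int phi_int Bochner_Integration.integrable_add) (auto simp: phi_nonneg split: split_indicator)
  also have "\<dots> = f_t t a b x + integral\<^sup>L lborel (\<lambda>m. phi t x m * indicator {..a} m) + integral\<^sup>L lborel (\<lambda>m. phi t x m * indicator {b..} m)"
    unfolding ft_eq using t
    by (subst Bochner_Integration.integral_add, (intro phi_ind_int Bochner_Integration.integrable_add; auto)+)
       (subst Bochner_Integration.integral_add, (intro phi_ind_int; auto)+, simp)
  finally show ?thesis using TL[OF t assms(2)] TR[OF t assms(3)] by simp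
qed

lemma gbound: assumes t: "t > 0" and ab: "a \<le> b"
  shows "\<bar>f_t t a b x - indicator {a..b} x\<bar> \<le> exp (- (t\<^sup>2 * (x - a)\<^sup>2)) / 2 + exp (- (t\<^sup>2 * (x - b)\<^sup>2)) / 2"
proof -
  have p1: "0 \<le> exp (- (t\<^sup>2 * (x - a)\<^sup>2)) / 2" "0 \<le> exp (- (t\<^sup>2 * (x - b)\<^sup>2)) / 2" by auto
  consider "x < a" | "a \<le> x" "x \<le> b" | "b < x" by linarith
  then show ?thesis
  proof cases
    case 1
    then have "f_t t a b x \<le> exp (- (t\<^sup>2 * (x - a)\<^sup>2)) / 2"
      using f_left[OF t, of x a b] by (simp add: power2_commute[of a x])
    moreover have "indicator {a..b} x = (0::real)" using 1 by simp
    ultimately show ?thesis using f_nonneg[OF t, of a b x] p1 by linarith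
  next
    case 2
    then show ?thesis using f_mid[OF t 2] f_le1[OF t, of a b x]
      by (simp add: power2_commute[of b x])
  next
    case 3
    moreover have "indicator {a..b} x = (0::real)" using 3 by simp
    ultimately show ?thesis using f_right[OF t, of b x a] f_nonneg[OF t, of a b x] p1 ab
      by linarith
  qed
qed

lemma abs_int_bound:
  fixes F G :: "real \<Rightarrow> real"
  assumes "\<And>x. \<bar>F x\<bar> \<le> G x" "integrable lborel G"
  shows "\<bar>integral\<^sup>L lborel F\<bar> \<le> integral\<^sup>L lborel G"
proof (cases "integrable lborel F")
  case True
  have "\<bar>integral\<^sup>L lborel F\<bar> \<le> integral\<^sup>L lborel (\<lambda>x. \<bar>F x\<bar>)"
    by (rule integral_abs_bound)
  also have "\<dots> \<le> integral\<^sup>L lborel G"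
    using True assms by (intro integral_mono) auto
  finally show ?thesis .
next
  case False
  have "0 \<le> integral\<^sup>L lborel G"
    using assms by (intro integral_nonneg_AE AE_I2) (meson abs_ge_zero order_trans)
  then show ?thesis using False by (simp add: not_integrable_integral_eq)
qed

lemma tanh_le2: assumes "(y::real) \<ge> 0" shows "tanh y \<le> 2 * y"
proof -
  let ?e = "exp (- 2 * y)"
  have e0: "0 < ?e" by simp
  have e1: "1 - 2 * y \<le> ?e" using exp_ge_add_one_self[of "- 2 * y"] by simp
  have e2: "?e \<le> 1" using assms by simp
  have "(1 - ?e) / (1 + ?e) \<le> 1 - ?e"
    using divide_left_mono[of 1 "1 + ?e" "1 - ?e"] e0 e2 by (simp add: add_pos_pos)
  then show ?thesis unfolding tanh_real_altdef using e1 by linarith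
qed

lemma sqrt_amgm: assumes "(u::real) \<ge> 0" "t > 0"
  shows "sqrt u \<le> (1 + t * u) / (2 * sqrt t)"
proof -
  define v where "v = sqrt t * sqrt u"
  have vv: "v\<^sup>2 = t * u" using assms by (simp add: v_def power_mult_distrib)
  have "2 * v \<le> 1 + v\<^sup>2" using sum_squares_ge_zero[of "v - 1" 0]
    by (simp add: power2_eq_square algebra_simps)
  then have "2 * sqrt t * sqrt u \<le> 1 + t * u" using vv by (simp add: v_def)
  then show ?thesis using assms by (simp add: le_divide_eq mult_ac)
qed

lemma psi_nonneg: "0 \<le> psi y" by (simp add: psi_def)
lemma psi1_nonneg: "0 \<le> psi1 y" by (simp add: psi1_def split: split_indicator)

lemma sqrt_pi_le: "sqrt pi \<le> pi"
proof -
  have "pi \<ge> 1" using pi_gt3 by simp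
  then have "sqrt pi * 1 \<le> sqrt pi * sqrt pi" by (intro mult_left_mono) auto
  then show ?thesis by simp
qed

lemma RI_eq: "R_I t a b = 1 / (4 * pi) * integral\<^sup>L lborel
   (\<lambda>x. indicator {1/4..} x *\<^sub>R ((f_t t a b x - indicator {a..b} x) * tanh (pi * sqrt (x - 1/4))))"
  unfolding R_I_def set_lebesgue_integral_def by simp

lemma bound1: assumes t: "t > 0" and ab: "a \<le> b"
  shows "\<bar>R_I t a b\<bar> \<le> 1 / t"
proof -
  let ?G = "\<lambda>x. sqrt pi / (2 * t) * (phi t a x + phi t b x)"
  have Gint: "integrable lborel ?G"
    using t by (intro integrable_mult_right Bochner_Integration.integrable_add phi_int)
  have Gval: "integral\<^sup>L lborel ?G = sqrt pi / t"
    using t by (simp add: phi_int phi_total)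
  have "\<bar>integral\<^sup>L lborel
   (\<lambda>x. indicator {1/4..} x *\<^sub>R ((f_t t a b x - indicator {a..b} x) * tanh (pi * sqrt (x - 1/4))))\<bar>
     \<le> integral\<^sup>L lborel ?G"
  proof (rule abs_int_bound[OF _ Gint])
    fix x
    have "?G x = exp (- (t\<^sup>2 * (x - a)\<^sup>2)) / 2 + exp (- (t\<^sup>2 * (x - b)\<^sup>2)) / 2"
      using t by (simp add: phi_def field_simps power2_commute)
    then have g: "\<bar>f_t t a b x - indicator {a..b} x\<bar> \<le> ?G x" using gbound[OF t ab, of x] by simp
    have th: "\<bar>tanh (pi * sqrt (x - 1/4))\<bar> \<le> 1"
      using tanh_real_bounds[of "pi * sqrt (x - 1/4)"] by auto
    have "\<bar>indicator {1/4..} x *\<^sub>R ((f_t t a b x - indicator {a..b} x) * tanh (pi * sqrt (x - 1/4)))\<bar>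
       \<le> \<bar>f_t t a b x - indicator {a..b} x\<bar> * \<bar>tanh (pi * sqrt (x - 1/4))\<bar>"
      by (simp add: abs_mult split: split_indicator)
    also have "\<dots> \<le> \<bar>f_t t a b x - indicator {a..b} x\<bar> * 1"
      by (intro mult_left_mono th) auto
    also have "\<dots> \<le> ?G x" using g by simp
    finally show "\<bar>indicator {1/4..} x *\<^sub>R ((f_t t a b x - indicator {a..b} x) * tanh (pi * sqrt (x - 1/4)))\<bar> \<le> ?G x" .
  qed
  note hI = this
  let ?I = "integral\<^sup>L lborel
   (\<lambda>x. indicator {1/4..} x *\<^sub>R ((f_t t a b x - indicator {a..b} x) * tanh (pi * sqrt (x - 1/4))))"
  have "\<bar>R_I t a b\<bar> = \<bar>?I\<bar> / (4 * pi)"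
    unfolding RI_eq abs_mult by simp
  also have "\<dots> \<le> (sqrt pi / t) / (4 * pi)"
    using hI Gval by (intro divide_right_mono) auto
  also have "\<dots> \<le> 1 / t"
    using t sqrt_pi_le pi_gt3 by (simp add: field_simps)
  finally show ?thesis .
qed

lemma bound2: assumes t: "t > 0" and ab: "a \<le> b" and b4: "b \<le> 1/4"
  shows "\<bar>R_I t a b\<bar> \<le> exp (- (3/4) * t\<^sup>2 * (1/4 - b)\<^sup>2) / t powr (3/2)"
proof -
  define d where "d = 1/4 - b"
  have d0: "d \<ge> 0" using b4 by (simp add: d_def)
  define K where "K = pi * exp (- (t\<^sup>2 * d\<^sup>2)) / (2 * sqrt t)"
  have K0: "K \<ge> 0" using t by (simp add: K_def)
  let ?G = "\<lambda>x. K * (psi (t * (x - 1/4)) + psi1 (t * (x - 1/4)))"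
  have hbG: "has_bochner_integral lborel ?G (K * (sqrt pi / (2 * t) + 1 / (2 * t)))"
    using t by (intro has_bochner_integral_mult_right has_bochner_integral_add tailR mom1)
  have Gint: "integrable lborel ?G" using hbG by (rule integrable.intros)
  have Gval: "integral\<^sup>L lborel ?G = K * (sqrt pi / (2 * t) + 1 / (2 * t))"
    using hbG by (rule has_bochner_integral_integral_eq)
  have "\<bar>integral\<^sup>L lborel
   (\<lambda>x. indicator {1/4..} x *\<^sub>R ((f_t t a b x - indicator {a..b} x) * tanh (pi * sqrt (x - 1/4))))\<bar>
     \<le> integral\<^sup>L lborel ?G"
  proof (rule abs_int_bound[OF _ Gint])
    fix x
    show "\<bar>indicator {1/4..} x *\<^sub>R ((f_t t a b x - indicator {a..b} x) * tanh (pi * sqrt (x - 1/4)))\<bar> \<le> ?G x"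
    proof (cases "x \<ge> 1/4")
      case False
      then show ?thesis using K0 psi_nonneg psi1_nonneg by simp
    next
      case True
      define u where "u = x - 1/4"
      have u0: "u \<ge> 0" using True by (simp add: u_def)
      have tz: "indicator {a..b} x * tanh (pi * sqrt (x - 1/4)) = 0"
      proof (cases "x \<le> b")
        case True
        then have "x = 1/4" using \<open>x \<ge> 1/4\<close> b4 by simp
        then show ?thesis by simp
      next
        case False
        then show ?thesis by simp
      qed
      have th0: "0 \<le> tanh (pi * sqrt (x - 1/4))" using True by simp
      have th: "tanh (pi * sqrt (x - 1/4)) \<le> 2 * (pi * sqrt u)"
        using tanh_le2[of "pi * sqrt (x - 1/4)"] True by (simp add: u_def)
      have f0: "0 \<le> f_t t a b x" by (rule f_nonneg[OF t])
      have fr: "f_t t a b x \<le> exp (- (t\<^sup>2 * (x - b)\<^sup>2)) / 2"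
        using f_right[OF t, of b x a] True b4 by simp
      have "x - b = u + d" by (simp add: u_def d_def)
      then have ex: "exp (- (t\<^sup>2 * (x - b)\<^sup>2)) \<le> exp (- (t\<^sup>2 * u\<^sup>2)) * exp (- (t\<^sup>2 * d\<^sup>2))"
        using exp_split[OF u0 d0, of t] by simp
      have sq: "sqrt u \<le> (1 + t * u) / (2 * sqrt t)" by (rule sqrt_amgm[OF u0 t])
      have "\<bar>indicator {1/4..} x *\<^sub>R ((f_t t a b x - indicator {a..b} x) * tanh (pi * sqrt (x - 1/4)))\<bar>
          = f_t t a b x * tanh (pi * sqrt (x - 1/4))"
      proof -
        have "indicator {1/4..} x *\<^sub>R ((f_t t a b x - indicator {a..b} x) * tanh (pi * sqrt (x - 1/4)))
           = f_t t a b x * tanh (pi * sqrt (x - 1/4)) - indicator {a..b} x * tanh (pi * sqrt (x - 1/4))"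
          using True by (simp add: algebra_simps)
        also have "\<dots> = f_t t a b x * tanh (pi * sqrt (x - 1/4))" using tz by simp
        finally have E: "indicator {1/4..} x *\<^sub>R ((f_t t a b x - indicator {a..b} x) * tanh (pi * sqrt (x - 1/4)))
           = f_t t a b x * tanh (pi * sqrt (x - 1/4))" .
        show ?thesis by (subst E, rule abs_of_nonneg, rule mult_nonneg_nonneg[OF f0 th0])
      qed
      also have "\<dots> \<le> (exp (- (t\<^sup>2 * u\<^sup>2)) * exp (- (t\<^sup>2 * d\<^sup>2)) / 2) * (2 * (pi * ((1 + t * u) / (2 * sqrt t))))"
      proof (intro mult_mono)
        show "f_t t a b x \<le> exp (- (t\<^sup>2 * u\<^sup>2)) * exp (- (t\<^sup>2 * d\<^sup>2)) / 2" using fr ex by simp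
        show "tanh (pi * sqrt (x - 1/4)) \<le> 2 * (pi * ((1 + t * u) / (2 * sqrt t)))"
          using th sq by (smt (verit, best) mult_left_mono pi_gt_zero)
      qed (use th0 in auto)
      also have "\<dots> = K * (exp (- (t\<^sup>2 * u\<^sup>2)) + exp (- (t\<^sup>2 * u\<^sup>2)) * (t * u))"
        unfolding K_def using t by (simp add: field_simps)
      also have "\<dots> = ?G x"
      proof -
        have i1: "indicator {0..} (t * u) = (1::real)" using t u0 by simp
        have "?G x = K * (psi (t * u) + psi1 (t * u))" by (simp add: u_def)
        also have "\<dots> = K * (exp (- (t\<^sup>2 * u\<^sup>2)) + exp (- (t\<^sup>2 * u\<^sup>2)) * (t * u))"
          unfolding psi_def psi1_def i1 by (simp add: power_mult_distrib)
        finally show ?thesis by (rule sym)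
      qed
      finally show ?thesis .
    qed
  qed
  note hI = this
  let ?I = "integral\<^sup>L lborel
   (\<lambda>x. indicator {1/4..} x *\<^sub>R ((f_t t a b x - indicator {a..b} x) * tanh (pi * sqrt (x - 1/4))))"
  have "\<bar>R_I t a b\<bar> = \<bar>?I\<bar> / (4 * pi)"
    unfolding RI_eq abs_mult by simp
  also have "\<dots> \<le> (K * (sqrt pi / (2 * t) + 1 / (2 * t))) / (4 * pi)"
    using hI Gval by (intro divide_right_mono) auto
  also have "\<dots> = exp (- (t\<^sup>2 * d\<^sup>2)) * ((sqrt pi + 1) / 16) / (t * sqrt t)"
    unfolding K_def using t by (simp add: field_simps)
  also have "\<dots> \<le> exp (- (3/4) * t\<^sup>2 * d\<^sup>2) * 1 / (t * sqrt t)"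
  proof (intro divide_right_mono mult_mono)
    show "exp (- (t\<^sup>2 * d\<^sup>2)) \<le> exp (- (3/4) * t\<^sup>2 * d\<^sup>2)"
      by (simp add: mult_nonneg_nonneg)
    show "(sqrt pi + 1) / 16 \<le> 1" using sqrt_pi_le pi_less_4 by simp
  qed (use t in auto)
  also have "t * sqrt t = t powr (3/2)"
  proof -
    have "t powr (3/2) = t powr (1 + 1/2)" by simp
    also have "\<dots> = t powr 1 * t powr (1/2)" by (rule powr_add)
    also have "\<dots> = t * sqrt t" using t by (simp add: powr_half_sqrt)
    finally show ?thesis by simp
  qed
  finally show ?thesis by (simp add: d_def)
qed

theorem proposition3p4:
  "\<exists>C::real. \<forall>t a b :: real. 0 \<le> a \<longrightarrow> a \<le> b \<longrightarrow> t > 0 \<longrightarrow>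
      \<bar>R_I t a b\<bar> \<le> C * (1 / t) \<and>
      (b \<le> 1/4 \<longrightarrow>
         \<bar>R_I t a b\<bar> \<le> C * (exp (- (3/4) * t\<^sup>2 * (1/4 - b)\<^sup>2) / t powr (3/2)))"
proof (intro exI[of _ 1] allI impI conjI)
  fix t a b :: real
  assume "0 \<le> a" "a \<le> b" "t > 0"
  then show "\<bar>R_I t a b\<bar> \<le> 1 * (1 / t)" using bound1 by simp
  assume "b \<le> 1/4"
  then show "\<bar>R_I t a b\<bar> \<le> 1 * (exp (- (3/4) * t\<^sup>2 * (1/4 - b)\<^sup>2) / t powr (3/2))"
    using bound2 \<open>a \<le> b\<close> \<open>t > 0\<close> by simp
qed

end
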